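(* For every typed DAG task $G=(V,E,\gamma,c)$ and every platform with $M_s\ge1$ cores of each type $s\in S$, \[ len(\hat G)+\sum_{s\in S}\frac{vol_s(G)}{M_s}\;\le\;\Big(1-\frac{1}{\max_{s\in S}M_s}\Big)len(G)+\sum_{s\in S}\frac{vol_s(G)}{M_s}, \] and there exist typed DAG tasks and platforms for which this inequality is strict.
   Context: A typed DAG task is $G=(V,E,\gamma,c)$ where $(V,E)$ is a finite directed acyclic graph with a unique source and a unique sink, $S$ is a finite set of core types, $\gamma:V\to S$ gives the type of each vertex, and $c:V\to\mathbb{R}_{\ge0}$ gives the WCET of each vertex. The platform has $M_s\ge1$ cores of type $s$. $vol_s(G)=\sum_{u\in V,\gamma(u)=s}c(u)$. For a path $\pi$, $len(\pi)=\sum_{u\in\pi}c(u)$ and $len(G)$ is the maximum of $len(\pi)$ over paths of $G$. The scaled graph $\hat G$ has the same vertices, edges and types as $G$ with weights $\hat c(v)=c(v)(1-1/M_{\gamma(v)})$, and $len(\hat G)$ is its longest path length with respect to $\hat c$. (The left-hand side is the bound called NEW-B-1, the right-hand side the earlier bound called OLD-B; the paper states "NEW-B-1 strictly dominates OLD-B".) *)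

theory Defs
  imports Complex_Main
begin

definition typed_dag_task ::
  "'v set \<Rightarrow> ('v \<times> 'v) set \<Rightarrow> 's set \<Rightarrow> ('v \<Rightarrow> 's) \<Rightarrow> ('v \<Rightarrow> real) \<Rightarrow> bool" where
  "typed_dag_task V E S gamma c \<longleftrightarrow>
     finite V \<and> E \<subseteq> V \<times> V \<and> acyclic E \<and>
     (\<exists>!v. v \<in> V \<and> (\<forall>u. (u, v) \<notin> E)) \<and>
     (\<exists>!v. v \<in> V \<and> (\<forall>u. (v, u) \<notin> E)) \<and>
     finite S \<and> gamma ` V \<subseteq> S \<and>
     (\<forall>v\<in>V. c v \<ge> 0)"

definition platform :: "'s set \<Rightarrow> ('s \<Rightarrow> nat) \<Rightarrow> bool" where
  "platform S M \<longleftrightarrow> (\<forall>s\<in>S. M s \<ge> 1)"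

definition is_path :: "'v set \<Rightarrow> ('v \<times> 'v) set \<Rightarrow> 'v list \<Rightarrow> bool" where
  "is_path V E p \<longleftrightarrow> p \<noteq> [] \<and> set p \<subseteq> V \<and> successively (\<lambda>x y. (x, y) \<in> E) p"

definition path_len :: "('v \<Rightarrow> real) \<Rightarrow> 'v list \<Rightarrow> real" where
  "path_len w p = sum_list (map w p)"

definition dag_len :: "'v set \<Rightarrow> ('v \<times> 'v) set \<Rightarrow> ('v \<Rightarrow> real) \<Rightarrow> real" where
  "dag_len V E w = Max (path_len w ` {p. is_path V E p})"

definition vol :: "'v set \<Rightarrow> ('v \<Rightarrow> 's) \<Rightarrow> ('v \<Rightarrow> real) \<Rightarrow> 's \<Rightarrow> real" where
  "vol V gamma c s = (\<Sum>u\<in>{u\<in>V. gamma u = s}. c u)"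

definition scaled :: "('v \<Rightarrow> 's) \<Rightarrow> ('v \<Rightarrow> real) \<Rightarrow> ('s \<Rightarrow> nat) \<Rightarrow> 'v \<Rightarrow> real" where
  "scaled gamma c M v = c v * (1 - 1 / real (M (gamma v)))"

definition new_b1 where
  "new_b1 V E S gamma c M =
     dag_len V E (scaled gamma c M) + (\<Sum>s\<in>S. vol V gamma c s / real (M s))"

definition old_b where
  "old_b V E S gamma c M =
     (1 - 1 / real (Max (M ` S))) * dag_len V E c + (\<Sum>s\<in>S. vol V gamma c s / real (M s))"

end

theory Submission
  imports Defs
begin

lemma sw_distinct:
  assumes "sorted_wrt P xs" "\<And>x. \<not> P x x" shows "distinct xs"
  using assms by (induction xs) auto

lemma path_distinct:
  assumes "acyclic E" "successively (\<lambda>x y. (x, y) \<in> E) p"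
  shows "distinct p"
proof -
  have "successively (\<lambda>x y. (x, y) \<in> E\<^sup>+) p"
    using assms(2) by (rule successively_mono) auto
  hence "sorted_wrt (\<lambda>x y. (x, y) \<in> E\<^sup>+) p"
    by (subst (asm) successively_conv_sorted_wrt) (auto simp: transp_def intro: trancl_trans)
  thus ?thesis
    by (rule sw_distinct) (use assms(1) in \<open>auto simp: acyclic_def\<close>)
qed

lemma paths_finite:
  assumes "finite V" "acyclic E"
  shows "finite {p. is_path V E p}"
proof -
  have "{p. is_path V E p} \<subseteq> {xs. set xs \<subseteq> V \<and> length xs \<le> card V}"
  proof
    fix p assume "p \<in> {p. is_path V E p}"
    hence p: "set p \<subseteq> V" "successively (\<lambda>x y. (x, y) \<in> E) p"
      by (auto simp: is_path_def)
    have "distinct p" using path_distinct[OF assms(2) p(2)] .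
    hence "length p = card (set p)" by (simp add: distinct_card)
    also have "\<dots> \<le> card V" using p(1) assms(1) by (simp add: card_mono)
    finally show "p \<in> {xs. set xs \<subseteq> V \<and> length xs \<le> card V}" using p by auto
  qed
  thus ?thesis using finite_lists_length_le[OF assms(1)] by (rule finite_subset)
qed

lemma part1:
  assumes T: "typed_dag_task V E S gamma c" and P: "platform S M"
  shows "new_b1 V E S gamma c M \<le> old_b V E S gamma c M"
proof -
  from T have fV: "finite V" and ac: "acyclic E" and fS: "finite S"
    and gS: "gamma ` V \<subseteq> S" and cnn: "\<forall>v\<in>V. c v \<ge> 0"
    and src: "\<exists>v. v \<in> V" by (auto simp: typed_dag_task_def)
  then obtain v0 where v0: "v0 \<in> V" by blast
  have Sne: "S \<noteq> {}" using v0 gS by auto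
  define Mx where "Mx = Max (M ` S)"
  have Mx1: "real Mx \<ge> 1"
  proof -
    have "M (gamma v0) \<le> Mx" unfolding Mx_def using fS gS v0 by auto
    moreover have "M (gamma v0) \<ge> 1" using P gS v0 by (auto simp: platform_def)
    ultimately show ?thesis by simp
  qed
  define a where "a = 1 - 1 / real Mx"
  have a0: "a \<ge> 0" unfolding a_def using Mx1 by (simp add: field_simps)
  define Ps where "Ps = {p. is_path V E p}"
  have fP: "finite Ps" unfolding Ps_def using paths_finite[OF fV ac] .
  have "is_path V E [v0]" using v0 by (simp add: is_path_def)
  hence Pne: "Ps \<noteq> {}" unfolding Ps_def by auto
  have each: "path_len (scaled gamma c M) p \<le> a * path_len c p" if "p \<in> Ps" for p
  proof -
    have sub: "set p \<subseteq> V" using that by (auto simp: Ps_def is_path_def)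
    have "path_len (scaled gamma c M) p = (\<Sum>v\<leftarrow>p. scaled gamma c M v)"
      by (simp add: path_len_def)
    also have "\<dots> \<le> (\<Sum>v\<leftarrow>p. a * c v)"
    proof (rule sum_list_mono)
      fix v assume "v \<in> set p"
      hence vV: "v \<in> V" using sub by auto
      have m1: "real (M (gamma v)) \<ge> 1" using P gS vV by (auto simp: platform_def)
      have "M (gamma v) \<le> Mx" unfolding Mx_def using fS gS vV by auto
      hence "real (M (gamma v)) \<le> real Mx" by simp
      hence "1 / real Mx \<le> 1 / real (M (gamma v))" using m1
        by (intro divide_left_mono) auto
      hence "1 - 1 / real (M (gamma v)) \<le> a" unfolding a_def by simp
      thus "scaled gamma c M v \<le> a * c v" unfolding scaled_def
        using cnn vV by (metis mult.commute mult_left_mono)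
    qed
    also have "\<dots> = a * path_len c p"
      by (simp add: path_len_def sum_list_const_mult)
    finally show ?thesis .
  qed
  have "dag_len V E (scaled gamma c M) \<le> a * dag_len V E c"
    unfolding dag_len_def Ps_def[symmetric]
  proof (subst Max_le_iff)
    show "finite (path_len (scaled gamma c M) ` Ps)" using fP by simp
    show "path_len (scaled gamma c M) ` Ps \<noteq> {}" using Pne by simp
    show "\<forall>x\<in>path_len (scaled gamma c M) ` Ps. x \<le> a * Max (path_len c ` Ps)"
    proof
      fix x assume "x \<in> path_len (scaled gamma c M) ` Ps"
      then obtain p where p: "p \<in> Ps" "x = path_len (scaled gamma c M) p" by auto
      have "path_len c p \<le> Max (path_len c ` Ps)" using fP p(1) by simp
      hence "a * path_len c p \<le> a * Max (path_len c ` Ps)" using a0 by (rule mult_left_mono)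
      thus "x \<le> a * Max (path_len c ` Ps)" using each[OF p(1)] p(2) by simp
    qed
  qed
  thus ?thesis unfolding new_b1_def old_b_def a_def Mx_def by simp
qed

theorem corollary1:
  shows "(\<forall>(V :: 'v set) (E :: ('v \<times> 'v) set) (S :: 's set) gamma c M.
            typed_dag_task V E S gamma c \<and> platform S M \<longrightarrow>
            new_b1 V E S gamma c M \<le> old_b V E S gamma c M)
       \<and> (\<exists>(V :: nat set) (E :: (nat \<times> nat) set) (S :: nat set) gamma c M.
            typed_dag_task V E S gamma c \<and> platform S M \<and>
            new_b1 V E S gamma c M < old_b V E S gamma c M)"
proof
  show "\<forall>(V :: 'v set) (E :: ('v \<times> 'v) set) (S :: 's set) gamma c M.
            typed_dag_task V E S gamma c \<and> platform S M \<longrightarrow>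
            new_b1 V E S gamma c M \<le> old_b V E S gamma c M"
    using part1 by blast
next
  define M :: "nat \<Rightarrow> nat" where "M = (\<lambda>s. if s = 0 then 1 else 2)"
  have paths: "{p. is_path {0::nat} {} p} = {[0]}"
  proof (intro set_eqI iffI)
    fix p assume "p \<in> {p. is_path {0::nat} {} p}"
    hence "p \<noteq> []" "set p \<subseteq> {0}" "successively (\<lambda>x y. (x, y) \<in> ({}::(nat\<times>nat) set)) p"
      by (auto simp: is_path_def)
    thus "p \<in> {[0]}"
      by (cases p rule: remdups_adj.cases) auto
  qed (auto simp: is_path_def)
  have T: "typed_dag_task {0::nat} {} {0, 1::nat} (\<lambda>_. 0) (\<lambda>_. 1)"
    by (auto simp: typed_dag_task_def acyclic_def)
  have P: "platform {0, 1::nat} M" by (simp add: platform_def M_def)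
  have "new_b1 {0::nat} {} {0, 1::nat} (\<lambda>_. 0) (\<lambda>_. 1) M < old_b {0::nat} {} {0, 1::nat} (\<lambda>_. 0) (\<lambda>_. 1) M"
    unfolding new_b1_def old_b_def dag_len_def paths
    by (simp add: path_len_def scaled_def M_def)
  thus "\<exists>(V :: nat set) (E :: (nat \<times> nat) set) (S :: nat set) gamma c M.
            typed_dag_task V E S gamma c \<and> platform S M \<and>
            new_b1 V E S gamma c M < old_b V E S gamma c M"
    using T P by blast
qed

end
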